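(* Let $\phi:\mathbb{N}_0\to\mathbb{N}_0$ satisfy $\phi(0)=0$ and $\phi(x)\neq x$ for all $x\in\mathbb{N}$, and let $n\ge2$. If the local function $\phi_n$ has no cycle, then \[ \#M_n(\phi)^k=|J_{n,k}(\phi)|\le n-k\quad(1\le k\le n), \] where $J_{n,k}(\phi)=\{x\in D_n:\phi_n^k(x)\in D_n\}$.
   Context: $\mathbb{N}=\{1,2,\dots\}$, $\mathbb{N}_0=\mathbb{N}\cup\{0\}$, $D_n=\{1,\dots,n\}$, $D_{n,0}=D_n\cup\{0\}$. The local function $\phi_n:D_{n,0}\to D_{n,0}$ is $\phi_n(x)=\phi(x)$ if $x\in D_n$ and $\phi(x)\in D_n$, and $\phi_n(x)=0$ otherwise. "$\phi_n$ has no cycle" means there are no $m\ge2$ and $x\in D_n$ with $\phi_n^m(x)=x$. For $1\le i\le n$, $\mathbf{e}_i$ is the $i$-th unit vector in $\mathbb{Z}^n$ and $\mathbf{e}_0$ the zero vector. $M_n(\phi)$ is the $n\times n$ matrix whose $j$-th column is $\mathbf{e}_{\phi_n(j)}$. $\#A$ denotes the number of nonzero entries of a matrix $A$, and $\#A^k$ means $\#(A^k)$. *)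

theory Defs
  imports Main "Jordan_Normal_Form.Matrix"
begin

definition local_fun :: "(nat \<Rightarrow> nat) \<Rightarrow> nat \<Rightarrow> nat \<Rightarrow> nat" where
  "local_fun phi n x = (if x \<in> {1..n} \<and> phi x \<in> {1..n} then phi x else 0)"

definition has_no_cycle :: "(nat \<Rightarrow> nat) \<Rightarrow> nat \<Rightarrow> bool" where
  "has_no_cycle phi n \<longleftrightarrow>
     \<not> (\<exists>m\<ge>2. \<exists>x\<in>{1..n}. (local_fun phi n ^^ m) x = x)"

text \<open>M_n(phi): n x n integer matrix whose j-th column (1-based) is the unit vector
  e_{phi_n(j)} (e_0 = zero vector). Isabelle matrices are 0-indexed, so entry (i,j)
  corresponds to row i+1, column j+1.\<close>
definition M_mat :: "nat \<Rightarrow> (nat \<Rightarrow> nat) \<Rightarrow> int mat" where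
  "M_mat n phi = mat n n (\<lambda>(i, j). if local_fun phi n (j + 1) = i + 1 then 1 else 0)"

definition nnz :: "'a::zero mat \<Rightarrow> nat" where
  "nnz A = card {(i, j). i < dim_row A \<and> j < dim_col A \<and> A $$ (i, j) \<noteq> 0}"

definition J_set :: "nat \<Rightarrow> nat \<Rightarrow> (nat \<Rightarrow> nat) \<Rightarrow> nat set" where
  "J_set n k phi = {x \<in> {1..n}. (local_fun phi n ^^ k) x \<in> {1..n}}"

end

theory Submission
  imports Defs
begin

lemma lf_le: "local_fun phi n x \<le> n"
  unfolding local_fun_def by auto

lemma lf_0: "local_fun phi n 0 = 0"
  unfolding local_fun_def by auto

lemma lf_pow_0: "(local_fun phi n ^^ i) 0 = 0"
  by (induct i) (auto simp: lf_0)

lemma lf_pow_le: "x \<le> n \<Longrightarrow> (local_fun phi n ^^ i) x \<le> n"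
  by (induct i) (auto simp: lf_le)

lemma lf_pow_mono0: "(local_fun phi n ^^ a) x = 0 \<Longrightarrow> (local_fun phi n ^^ (c + a)) x = 0"
  by (simp add: funpow_add lf_pow_0)

lemma M_pow_entry:
  assumes "i < n" "j < n"
  shows "(M_mat n phi ^\<^sub>m k) $$ (i, j) = (if (local_fun phi n ^^ k) (j + 1) = i + 1 then 1 else 0)"
  using assms
proof (induct k arbitrary: i j)
  case 0
  then show ?case by (simp add: M_mat_def)
next
  case (Suc k)
  let ?f = "local_fun phi n"
  have dims: "dim_row (M_mat n phi ^\<^sub>m k) = n" "dim_col (M_mat n phi) = n" "dim_row (M_mat n phi) = n"
    by (auto simp: M_mat_def)
  have "(M_mat n phi ^\<^sub>m Suc k) $$ (i, j) =
        (\<Sum>l<n. (M_mat n phi ^\<^sub>m k) $$ (i, l) * M_mat n phi $$ (l, j))"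
    using Suc.prems dims
    by (simp add: index_mult_mat scalar_prod_def atLeast0LessThan row_def col_def)
  also have "\<dots> = (\<Sum>l<n. (if (?f ^^ k) (l + 1) = i + 1 then 1 else 0) * (if ?f (j + 1) = l + 1 then 1 else 0))"
    using Suc by (intro sum.cong) (auto simp: M_mat_def)
  also have "\<dots> = (if (?f ^^ Suc k) (j + 1) = i + 1 then 1 else 0)"
  proof (cases "?f (j + 1) = 0")
    case True
    have "(?f ^^ Suc k) (j + 1) = (?f ^^ k) (?f (j + 1))" by (simp only: funpow_Suc_right o_apply)
    then show ?thesis using True by (simp add: lf_pow_0)
  next
    case False
    then obtain l0 where l0: "?f (j+1) = l0 + 1" "l0 < n"
      using lf_le[of phi n "j+1"] by (metis Suc_eq_plus1 Suc_le_lessD not0_implies_Suc)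
    have "(\<Sum>l<n. (if (?f ^^ k) (l + 1) = i + 1 then 1 else 0) * (if ?f (j + 1) = l + 1 then 1 else 0))
        = (\<Sum>l\<in>{l0}. (if (?f ^^ k) (l + 1) = i + 1 then 1 else (0::int)))"
      using l0 by (intro sum.mono_neutral_cong_right) auto
    moreover have "(?f ^^ Suc k) (j + 1) = (?f ^^ k) (?f (j + 1))" by (simp only: funpow_Suc_right o_apply)
    ultimately show ?thesis using l0 by simp
  qed
  finally show ?case .
qed

lemma distinct_orbit:
  assumes noc: "has_no_cycle phi n" and nofix: "\<And>x. x \<ge> 1 \<Longrightarrow> phi x \<noteq> x"
    and ya: "(local_fun phi n ^^ a) x \<in> {1..n}" and ab: "a < b"
  shows "(local_fun phi n ^^ a) x \<noteq> (local_fun phi n ^^ b) x"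
proof
  let ?f = "local_fun phi n"
  let ?y = "(?f ^^ a) x"
  assume eq: "?y = (?f ^^ b) x"
  have "(?f ^^ (b - a)) ?y = (?f ^^ ((b - a) + a)) x"
    by (simp only: funpow_add o_apply)
  hence "(?f ^^ (b - a)) ?y = (?f ^^ b) x" using ab by simp
  with eq have cyc: "(?f ^^ (b - a)) ?y = ?y" by simp
  show False
  proof (cases "b - a = 1")
    case True
    with cyc have "?f ?y = ?y" by simp
    moreover have "?f ?y \<noteq> ?y" using ya nofix[of ?y] unfolding local_fun_def by auto
    ultimately show False by simp
  next
    case False
    with ab have "b - a \<ge> 2" by simp
    with cyc ya noc show False unfolding has_no_cycle_def by blast
  qed
qed

lemma card_J_bound:
  assumes noc: "has_no_cycle phi n" and nofix: "\<And>x. x \<ge> 1 \<Longrightarrow> phi x \<noteq> x"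
  shows "card (J_set n k phi) \<le> n - k"
proof (cases "J_set n k phi = {}")
  case True then show ?thesis by simp
next
  case False
  let ?f = "local_fun phi n"
  obtain x where x: "x \<in> J_set n k phi" using False by blast
  let ?I = "{i. (?f ^^ i) x \<in> {1..n}}"
  have xD: "x \<in> {1..n}" using x by (simp add: J_set_def)
  have inj: "inj_on (\<lambda>i. (?f ^^ i) x) ?I"
  proof (rule inj_onI)
    fix a b assume a: "a \<in> ?I" and b: "b \<in> ?I" and e: "(?f ^^ a) x = (?f ^^ b) x"
    show "a = b"
    proof (rule ccontr)
      assume "a \<noteq> b"
      then consider "a < b" | "b < a" by linarith
      then show False
      proof cases
        case 1 then show False using distinct_orbit[OF noc nofix, of a x b] a e by simp
      next
        case 2 then show False using distinct_orbit[OF noc nofix, of b x a] b e by simp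
      qed
    qed
  qed
  have "(\<lambda>i. (?f ^^ i) x) ` ?I \<subseteq> {1..n}" by auto
  hence finI: "finite ?I" using inj finite_imageD finite_subset by (metis finite_atLeastAtMost)
  have kI: "k \<in> ?I" using x by (simp add: J_set_def)
  define m where "m = Max ?I"
  have km: "k \<le> m" using finI kI m_def by simp
  have mI: "m \<in> ?I" using finI kI m_def Max_in by blast
  have below: "i \<le> m \<Longrightarrow> (?f ^^ i) x \<in> {1..n}" for i
  proof (rule ccontr)
    assume im: "i \<le> m" and nD: "(?f ^^ i) x \<notin> {1..n}"
    have "(?f ^^ i) x = 0" using nD lf_pow_le[where x=x and phi=phi and n=n and i=i] xD by auto
    hence "(?f ^^ ((m - i) + i)) x = 0" by (rule lf_pow_mono0)
    with im mI show False by simp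
  qed
  have above: "i > m \<Longrightarrow> (?f ^^ i) x = 0" for i
  proof -
    assume "i > m"
    hence "i \<notin> ?I" using finI m_def Max_ge leD by blast
    thus ?thesis using lf_pow_le[where x=x and phi=phi and n=n and i=i] xD by auto
  qed
  define T where "T = (\<lambda>i. (?f ^^ i) x) ` {m - k + 1..m}"
  have TD: "T \<subseteq> {1..n}" unfolding T_def using below by auto
  have cardT: "card T = k"
  proof -
    have "inj_on (\<lambda>i. (?f ^^ i) x) {m - k + 1..m}"
      using inj by (rule inj_on_subset) (use below in auto)
    thus ?thesis unfolding T_def using km by (simp add: card_image)
  qed
  have disj: "J_set n k phi \<inter> T = {}"
  proof -
    { fix i assume i: "i \<in> {m - k + 1..m}"
      have "(?f ^^ k) ((?f ^^ i) x) = (?f ^^ (k + i)) x" by (simp add: funpow_add)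
      also have "\<dots> = 0" using i km by (intro above) auto
      finally have "(?f ^^ k) ((?f ^^ i) x) = 0" . }
    thus ?thesis unfolding T_def J_set_def by auto
  qed
  have JD: "J_set n k phi \<subseteq> {1..n}" by (auto simp: J_set_def)
  have "card (J_set n k phi \<union> T) \<le> n"
    using JD TD card_mono[of "{1..n}" "J_set n k phi \<union> T"] by auto
  moreover have "card (J_set n k phi \<union> T) = card (J_set n k phi) + card T"
    using disj JD TD by (intro card_Un_disjoint) (auto intro: finite_subset)
  ultimately show ?thesis using cardT by simp
qed

lemma nnz_eq:
  "nnz (M_mat n phi ^\<^sub>m k) = card (J_set n k phi)"
proof -
  let ?f = "local_fun phi n"
  let ?S = "{(i, j). i < n \<and> j < n \<and> (?f ^^ k) (j + 1) = i + 1}"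
  let ?A = "{j. j < n \<and> (?f ^^ k) (j + 1) \<in> {1..n}}"
  have dims: "dim_row (M_mat n phi ^\<^sub>m k) = n" "dim_col (M_mat n phi ^\<^sub>m k) = n"
    by (auto simp: M_mat_def)
  have "nnz (M_mat n phi ^\<^sub>m k) = card ?S"
    unfolding nnz_def dims by (intro arg_cong[where f=card]) (auto simp: M_pow_entry split: if_splits)
  also have "?S = (\<lambda>j. ((?f ^^ k) (j + 1) - 1, j)) ` ?A"
  proof (intro equalityI subsetI)
    fix p assume "p \<in> ?S"
    then obtain i j where p: "p = (i, j)" "i < n" "j < n" "(?f ^^ k) (j + 1) = i + 1" by blast
    then show "p \<in> (\<lambda>j. ((?f ^^ k) (j + 1) - 1, j)) ` ?A" by (intro image_eqI[of _ _ j]) auto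
  next
    fix p assume "p \<in> (\<lambda>j. ((?f ^^ k) (j + 1) - 1, j)) ` ?A"
    then show "p \<in> ?S" by auto
  qed
  also have "card \<dots> = card ?A" by (rule card_image) (auto intro: inj_onI)
  also have "?A = (\<lambda>x. x - 1) ` J_set n k phi"
    apply (auto simp: J_set_def image_iff)
    subgoal for x by (rule exI[of _ "Suc x"]) auto
    done
  also have "card \<dots> = card (J_set n k phi)"
    by (rule card_image) (auto simp: J_set_def inj_on_def)
  finally show ?thesis .
qed

theorem corollary3p4:
  fixes phi :: "nat \<Rightarrow> nat" and n :: nat
  assumes "phi 0 = 0"
    and "\<And>x. x \<ge> 1 \<Longrightarrow> phi x \<noteq> x"
    and "n \<ge> 2"
    and "has_no_cycle phi n"
  shows "\<forall>k. 1 \<le> k \<and> k \<le> n \<longrightarrow>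
           nnz (M_mat n phi ^\<^sub>m k) = card (J_set n k phi) \<and> card (J_set n k phi) \<le> n - k"
  using nnz_eq card_J_bound[OF assms(4) assms(2)] by blast

end
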